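(* Let $\mathcal S$ be a finite collection of subsets of $[d]$ satisfying the merged-staircase property, i.e. its elements can be ordered $S_1,\dots,S_r$ so that $|S_i\setminus\bigcup_{j<i}S_j|\le1$ for every $i$. Draw $\{\alpha_S\}_{S\in\mathcal S}$ from any probability measure on $\mathbb R^{|\mathcal S|}$ absolutely continuous with respect to Lebesgue measure, and let $f^*=\sum_{S\in\mathcal S}\alpha_S\chi_S$. Then $f^*$ satisfies the stable merged-staircase property almost surely.
   Context: $\chi_S(\mathbf x)=\prod_{j\in S}x_j$ on $\{\pm1\}^d$. Every $f:\{\pm1\}^m\to\mathbb R$ has a unique expansion $f=\sum_S\beta_S\chi_S$; $f$ satisfies MSP if the sets $S$ with $\beta_S\ne0$ can be ordered $S_1,\dots,S_r$ with $|S_i\setminus\bigcup_{j<i}S_j|\le1$ for all $i$. A cell is $C=\{\mathbf x\in\{\pm1\}^d:x_j=z_j,\ j\in J(C)\}$; the restriction $f^*|_C$ is viewed as a function of the free coordinates $x_j$, $j\notin J(C)$. $f^*$ satisfies the stable merged-staircase property (SMSP) if $f^*|_C$ satisfies MSP for every cell $C$. *)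

theory Defs
  imports "HOL-Probability.Probability"
begin

definition cube :: "nat set \<Rightarrow> (nat \<Rightarrow> real) set" where
  "cube I = PiE I (\<lambda>_. {-1, 1})"

definition chi :: "nat set \<Rightarrow> (nat \<Rightarrow> real) \<Rightarrow> real" where
  "chi S x = (\<Prod>j\<in>S. x j)"

definition merged_staircase :: "nat set set \<Rightarrow> bool" where
  "merged_staircase SS \<longleftrightarrow>
     (\<exists>ss :: nat set list. distinct ss \<and> set ss = SS \<and>
        (\<forall>i < length ss. card (ss ! i - \<Union> (set (take i ss))) \<le> 1))"

text \<open>MSP for a function on the cube with coordinate set I: the (unique) Fourier
  expansion has a support satisfying the merged-staircase property.\<close>
definition MSP_on :: "nat set \<Rightarrow> ((nat \<Rightarrow> real) \<Rightarrow> real) \<Rightarrow> bool" where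
  "MSP_on I f \<longleftrightarrow>
     (\<exists>\<beta> :: nat set \<Rightarrow> real.
        (\<forall>x\<in>cube I. f x = (\<Sum>S\<in>Pow I. \<beta> S * chi S x)) \<and>
        merged_staircase {S \<in> Pow I. \<beta> S \<noteq> 0})"

definition restrict_cell :: "((nat \<Rightarrow> real) \<Rightarrow> real) \<Rightarrow> nat set \<Rightarrow> (nat \<Rightarrow> real)
    \<Rightarrow> (nat \<Rightarrow> real) \<Rightarrow> real" where
  "restrict_cell f J z = (\<lambda>y. f (\<lambda>j. if j \<in> J then z j else y j))"

definition SMSP :: "nat \<Rightarrow> ((nat \<Rightarrow> real) \<Rightarrow> real) \<Rightarrow> bool" where
  "SMSP d f \<longleftrightarrow>
     (\<forall>J \<subseteq> {1..d}. \<forall>z\<in>cube J. MSP_on ({1..d} - J) (restrict_cell f J z))"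

end

theory Submission
  imports Defs
begin

lemma hyper_null:
  fixes SS :: "nat set set" and A :: "nat set set" and c :: "nat set \<Rightarrow> real"
  assumes fin: "finite SS" and AS: "A \<subseteq> SS" and S0: "S0 \<in> A" and c0: "c S0 \<noteq> 0"
  shows "{\<alpha> \<in> space (PiM SS (\<lambda>_. lborel)). (\<Sum>S\<in>A. c S * \<alpha> S) = 0} \<in> null_sets (PiM SS (\<lambda>_. lborel))"
proof -
  interpret product_sigma_finite "\<lambda>_. lborel" by standard
  define B where "B = {\<alpha> \<in> space (PiM SS (\<lambda>_. lborel)). (\<Sum>S\<in>A. c S * \<alpha> S) = 0}"
  have finA: "finite A" using fin AS finite_subset by blast
  have SSi: "SS = insert S0 (SS - {S0})" using S0 AS by blast
  have gm: "(\<lambda>x. \<Sum>S\<in>A. c S * x S) \<in> borel_measurable (PiM SS (\<lambda>_. lborel))"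
    apply (rule borel_measurable_sum)
    apply (rule borel_measurable_times[OF borel_measurable_const])
    using AS by (auto intro!: measurable_component_singleton)
  have "(\<lambda>x. \<Sum>S\<in>A. c S * x S) -` {0} \<inter> space (PiM SS (\<lambda>_. lborel)) \<in> sets (PiM SS (\<lambda>_. lborel))"
    by (rule measurable_sets[OF gm]) simp
  moreover have "B = (\<lambda>x. \<Sum>S\<in>A. c S * x S) -` {0} \<inter> space (PiM SS (\<lambda>_. lborel))"
    unfolding B_def by auto
  ultimately have Bm: "B \<in> sets (PiM SS (\<lambda>_. lborel))" by simp
  have "emeasure (PiM SS (\<lambda>_. lborel)) B = (\<integral>\<^sup>+ x. indicator B x \<partial>(PiM SS (\<lambda>_. lborel)))"
    using Bm by simp
  also have "\<dots> = (\<integral>\<^sup>+ x. (\<integral>\<^sup>+ y. indicator B (x(S0 := y)) \<partial>lborel) \<partial>(PiM (SS - {S0}) (\<lambda>_. lborel)))"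
    apply (subst SSi)
    apply (rule product_nn_integral_insert)
    using fin Bm SSi by auto
  also have "\<dots> = (\<integral>\<^sup>+ x. 0 \<partial>(PiM (SS - {S0}) (\<lambda>_. lborel)))"
  proof -
  have "(\<integral>\<^sup>+ y. indicator B (x(S0 := y)) \<partial>lborel) = 0" for x
  proof -
    define p where "p = - (\<Sum>S\<in>A-{S0}. c S * x S) / c S0"
    have le: "indicator B (x(S0 := y)) \<le> (indicator {p} y :: ennreal)" for y
    proof (cases "x(S0 := y) \<in> B")
      case True
      then have "(\<Sum>S\<in>A. c S * (x(S0 := y)) S) = 0" unfolding B_def by auto
      then have "c S0 * y + (\<Sum>S\<in>A-{S0}. c S * x S) = 0"
        using finA S0 by (simp add: sum.remove[of A S0])
      then have "y = p" unfolding p_def using c0 by (simp add: field_simps)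
      then show ?thesis using True by simp
    qed simp
    have "(\<integral>\<^sup>+ y. indicator B (x(S0 := y)) \<partial>lborel) \<le> (\<integral>\<^sup>+ y. indicator {p} y \<partial>lborel)"
      by (rule nn_integral_mono) (use le in auto)
    also have "\<dots> = 0" by simp
    finally show "(\<integral>\<^sup>+ y. indicator B (x(S0 := y)) \<partial>lborel) = 0" by simp
  qed
  then show ?thesis by simp
  qed
  finally show ?thesis using Bm unfolding B_def[symmetric] by (simp add: null_sets_def)
qed

definition stair :: "nat set list \<Rightarrow> bool" where
  "stair xs \<longleftrightarrow> (\<forall>i < length xs. card (xs ! i - \<Union> (set (take i xs))) \<le> 1)"

lemma stair_snoc: "stair (xs @ [x]) \<longleftrightarrow> stair xs \<and> card (x - \<Union> (set xs)) \<le> 1"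
proof -
  have a: "(xs @ [x]) ! i = xs ! i \<and> take i (xs @ [x]) = take i xs" if "i < length xs" for i
    using that by (simp add: nth_append)
  show ?thesis
    unfolding stair_def
  proof safe
    fix i assume h: "\<forall>i<length (xs @ [x]). card ((xs @ [x]) ! i - \<Union> (set (take i (xs @ [x])))) \<le> 1" "i < length xs"
    then show "card (xs ! i - \<Union> (set (take i xs))) \<le> 1" using a[of i] by (metis length_append_singleton less_SucI)
  next
    assume h: "\<forall>i<length (xs @ [x]). card ((xs @ [x]) ! i - \<Union> (set (take i (xs @ [x])))) \<le> 1"
    then show "card (x - \<Union> (set xs)) \<le> 1" by (metis length_append_singleton lessI nth_append_length take_all_iff order_refl butlast_snoc take_butlast)
  next
    fix i assume h: "\<forall>i<length xs. card (xs ! i - \<Union> (set (take i xs))) \<le> 1" "card (x - \<Union> (set xs)) \<le> 1" "i < length (xs @ [x])"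
    show "card ((xs @ [x]) ! i - \<Union> (set (take i (xs @ [x])))) \<le> 1"
    proof (cases "i < length xs")
      case True then show ?thesis using h a by simp
    next
      case False then have "i = length xs" using h(3) by simp
      then show ?thesis using h(2) by simp
    qed
  qed
qed
lemma stair_dedup: "stair xs \<Longrightarrow> \<exists>ys. distinct ys \<and> set ys = set xs \<and> stair ys"
proof (induction xs rule: rev_induct)
  case Nil
  then show ?case by (auto simp: stair_def)
next
  case (snoc x xs)
  have sx: "stair xs" "card (x - \<Union> (set xs)) \<le> 1" using snoc.prems stair_snoc by auto
  then obtain ys where ys: "distinct ys" "set ys = set xs" "stair ys"
    using snoc.IH by blast
  show ?case
  proof (cases "x \<in> set xs")
    case True
    then have "set ys = set (xs @ [x])" using ys by auto
    then show ?thesis using ys by blast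
  next
    case False
    have "distinct (ys @ [x])" using ys False by simp
    moreover have "set (ys @ [x]) = set (xs @ [x])" using ys by simp
    moreover have "stair (ys @ [x])" using ys sx stair_snoc by simp
    ultimately show ?thesis by blast
  qed
qed

lemma stair_map:
  assumes "stair ss" "\<forall>S\<in>set ss. finite S"
  shows "stair (map (\<lambda>S. S - J) ss)"
  unfolding stair_def
proof (intro allI impI)
  fix i assume i: "i < length (map (\<lambda>S. S - J) ss)"
  then have i': "i < length ss" by simp
  have sub: "map (\<lambda>S. S - J) ss ! i - \<Union> (set (take i (map (\<lambda>S. S - J) ss)))
      \<subseteq> ss ! i - \<Union> (set (take i ss))"
  proof
    fix y assume y: "y \<in> map (\<lambda>S. S - J) ss ! i - \<Union> (set (take i (map (\<lambda>S. S - J) ss)))"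
    have e1: "map (\<lambda>S. S - J) ss ! i = ss ! i - J" using i' by simp
    have e2: "set (take i (map (\<lambda>S. S - J) ss)) = (\<lambda>S. S - J) ` set (take i ss)"
      by (simp add: take_map)
    show "y \<in> ss ! i - \<Union> (set (take i ss))" using y unfolding e1 e2 by blast
  qed
  have "ss ! i \<in> set ss" by (rule nth_mem[OF i'])
  then have "finite (ss ! i)" using assms(2) by blast
  then have "finite (ss ! i - \<Union> (set (take i ss)))" by (rule finite_Diff)
  then have "card (map (\<lambda>S. S - J) ss ! i - \<Union> (set (take i (map (\<lambda>S. S - J) ss))))
      \<le> card (ss ! i - \<Union> (set (take i ss)))" using sub card_mono by blast
  also have "\<dots> \<le> 1" using assms(1) i' unfolding stair_def by (elim allE[of _ i]) (elim impE)
  finally show "card (map (\<lambda>S. S - J) ss ! i - \<Union> (set (take i (map (\<lambda>S. S - J) ss)))) \<le> 1" .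
qed

lemma ms_image:
  assumes "merged_staircase SS" "\<forall>S\<in>SS. finite S"
  shows "merged_staircase ((\<lambda>S. S - J) ` SS)"
proof -
  obtain ss where ss: "distinct ss" "set ss = SS" "stair ss"
    using assms(1) unfolding merged_staircase_def stair_def by blast
  have "stair (map (\<lambda>S. S - J) ss)" using stair_map ss assms(2) by blast
  from stair_dedup[OF this] obtain ys where ys: "distinct ys" "set ys = set (map (\<lambda>S. S - J) ss)" "stair ys"
    by blast
  have "set (map (\<lambda>S. S - J) ss) = (\<lambda>S. S - J) ` SS" using ss(2) by simp
  then have "distinct ys \<and> set ys = (\<lambda>S. S - J) ` SS \<and> stair ys" using ys by simp
  then show ?thesis unfolding merged_staircase_def stair_def by (intro exI[of _ ys])
qed


theorem propositionG1:
  fixes d :: nat and SS :: "nat set set" and M :: "(nat set \<Rightarrow> real) measure"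
  assumes "finite SS"
    and "\<forall>S\<in>SS. S \<subseteq> {1..d}"
    and "merged_staircase SS"
    and "prob_space M"
    and "sets M = sets (PiM SS (\<lambda>_. lborel))"
    and "absolutely_continuous (PiM SS (\<lambda>_. lborel)) M"
  shows "AE \<alpha> in M. SMSP d (\<lambda>x. \<Sum>S\<in>SS. \<alpha> S * chi S x)"
proof -
  define N where "N = PiM SS (\<lambda>_. (lborel :: real measure))"
  define beta where "beta J z \<alpha> T = (\<Sum>S\<in>{S\<in>SS. S - J = T}. \<alpha> S * chi (S \<inter> J) z)"
    for J :: "nat set" and z :: "nat \<Rightarrow> real" and \<alpha> :: "nat set \<Rightarrow> real" and T
  define Bad where "Bad = (\<Union>J\<in>Pow {1..d}. \<Union>z\<in>cube J. \<Union>T\<in>(\<lambda>S. S - J) ` SS.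
      {\<alpha> \<in> space N. beta J z \<alpha> T = 0})"
  have finS: "finite S" if "S \<in> SS" for S
    using assms(2) that finite_subset by blast
  have chi_nz: "chi (S \<inter> J) z \<noteq> 0" if "S \<in> SS" "z \<in> cube J" for S J z
  proof -
    have "finite (S \<inter> J)" using finS[OF that(1)] by simp
    moreover have "\<forall>j\<in>S \<inter> J. z j \<noteq> 0" using that(2) unfolding cube_def by (auto simp: PiE_iff)
    ultimately show ?thesis unfolding chi_def by simp
  qed
  have comp_null: "{\<alpha> \<in> space N. beta J z \<alpha> T = 0} \<in> null_sets N"
    if zT: "z \<in> cube J" "T \<in> (\<lambda>S. S - J) ` SS" for J z T
  proof -
    obtain S0 where S0: "S0 \<in> SS" "T = S0 - J" using zT(2) by blast
    have "{\<alpha> \<in> space N. beta J z \<alpha> T = 0} =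
        {\<alpha> \<in> space N. (\<Sum>S\<in>{S\<in>SS. S - J = T}. chi (S \<inter> J) z * \<alpha> S) = 0}"
      unfolding beta_def by (simp add: mult.commute)
    also have "\<dots> \<in> null_sets N" unfolding N_def
      by (rule hyper_null[OF assms(1), of _ S0]) (use S0 chi_nz[OF S0(1) zT(1)] in auto)
    finally show ?thesis .
  qed
  have "Bad \<in> null_sets N"
    unfolding Bad_def
    by (intro null_sets_UN' countable_finite comp_null)
       (auto simp: cube_def intro!: finite_PiE assms(1) intro: rev_finite_subset[OF finite_atLeastAtMost])
  then have BadM: "Bad \<in> null_sets M" using assms(6) unfolding absolutely_continuous_def N_def by blast
  have spM: "space M = space N" unfolding N_def using assms(5) by (rule sets_eq_imp_space_eq)
  have good: "SMSP d (\<lambda>x. \<Sum>S\<in>SS. \<alpha> S * chi S x)"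
    if \<alpha>sp: "\<alpha> \<in> space M" and nb: "\<alpha> \<notin> Bad" for \<alpha>
      unfolding SMSP_def
    proof (intro allI impI ballI)
      fix J z assume J: "J \<subseteq> {1..d}" and z: "z \<in> cube J"
      define I where "I = {1..d} - J"
      have sub: "S - J \<in> Pow I" if "S \<in> SS" for S using assms(2) that unfolding I_def by auto
      have rep: "restrict_cell (\<lambda>x. \<Sum>S\<in>SS. \<alpha> S * chi S x) J z y = (\<Sum>T\<in>Pow I. beta J z \<alpha> T * chi T y)" for y
      proof -
        have split: "chi S (\<lambda>j. if j \<in> J then z j else y j) = chi (S \<inter> J) z * chi (S - J) y"
          if "S \<in> SS" for S
        proof -
          have eqS: "(S \<inter> J) \<union> (S - J) = S" by blast
          have "chi S (\<lambda>j. if j \<in> J then z j else y j) =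
              (\<Prod>j\<in>(S \<inter> J) \<union> (S - J). (if j \<in> J then z j else y j))" unfolding chi_def eqS ..
          also have "\<dots> = (\<Prod>j\<in>S \<inter> J. (if j \<in> J then z j else y j)) * (\<Prod>j\<in>S - J. (if j \<in> J then z j else y j))"
            by (rule prod.union_disjoint) (use finS[OF that] in auto)
          also have "\<dots> = chi (S \<inter> J) z * chi (S - J) y" unfolding chi_def
            by (intro arg_cong2[where f="(*)"] prod.cong) auto
          finally show ?thesis .
        qed
        have "restrict_cell (\<lambda>x. \<Sum>S\<in>SS. \<alpha> S * chi S x) J z y
            = (\<Sum>S\<in>SS. \<alpha> S * chi (S \<inter> J) z * chi (S - J) y)"
          unfolding restrict_cell_def by (intro sum.cong) (auto simp: split)
        also have "\<dots> = (\<Sum>T\<in>Pow I. \<Sum>S\<in>{S\<in>SS. S - J = T}. \<alpha> S * chi (S \<inter> J) z * chi (S - J) y)"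
          by (rule sum.group[symmetric]) (use assms(1) sub in \<open>auto simp: I_def\<close>)
        also have "\<dots> = (\<Sum>T\<in>Pow I. beta J z \<alpha> T * chi T y)"
          unfolding beta_def sum_distrib_right by (intro sum.cong refl) auto
        finally show ?thesis .
      qed
      have supp: "{T \<in> Pow I. beta J z \<alpha> T \<noteq> 0} = (\<lambda>S. S - J) ` SS"
      proof
        show "{T \<in> Pow I. beta J z \<alpha> T \<noteq> 0} \<subseteq> (\<lambda>S. S - J) ` SS"
        proof
          fix T assume "T \<in> {T \<in> Pow I. beta J z \<alpha> T \<noteq> 0}"
          then have bnz: "beta J z \<alpha> T \<noteq> 0" by simp
          have "{S\<in>SS. S - J = T} \<noteq> {}"
          proof
            assume "{S\<in>SS. S - J = T} = {}"
            then have "beta J z \<alpha> T = 0" unfolding beta_def by (simp only: sum.empty)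
            then show False using bnz by contradiction
          qed
          then obtain S where S: "S \<in> SS" "S - J = T" by blast
          show "T \<in> (\<lambda>S. S - J) ` SS" using rev_image_eqI[of S SS T "\<lambda>S. S - J", OF S(1) S(2)[symmetric]] .
        qed
      next
        show "(\<lambda>S. S - J) ` SS \<subseteq> {T \<in> Pow I. beta J z \<alpha> T \<noteq> 0}"
        proof
          fix T assume T: "T \<in> (\<lambda>S. S - J) ` SS"
          then have "T \<in> Pow I" using sub by blast
          moreover have "beta J z \<alpha> T \<noteq> 0"
          proof
            assume "beta J z \<alpha> T = 0"
            then have m: "\<alpha> \<in> {\<alpha> \<in> space N. beta J z \<alpha> T = 0}" using \<alpha>sp spM by simp
            have "\<alpha> \<in> Bad" unfolding Bad_def
              apply (rule UN_I[of J])
              using J apply simp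
              apply (rule UN_I[of z])
              using z apply simp
              apply (rule UN_I[of T])
              using T apply simp
              apply (rule m)
              done
            then show False using nb by blast
          qed
          ultimately show "T \<in> {T \<in> Pow I. beta J z \<alpha> T \<noteq> 0}" by blast
        qed
      qed
      show "MSP_on ({1..d} - J) (restrict_cell (\<lambda>x. \<Sum>S\<in>SS. \<alpha> S * chi S x) J z)"
        unfolding MSP_on_def I_def[symmetric]
      proof (intro exI[of _ "beta J z \<alpha>"] conjI ballI)
        show "merged_staircase {S \<in> Pow I. beta J z \<alpha> S \<noteq> 0}"
          unfolding supp using ms_image[OF assms(3)] finS by blast
      qed (rule rep)
    qed
  show ?thesis
    by (rule AE_I'[OF BadM]) (use good in blast)
qed

end
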